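(* Let $p,q$ be integers with $0\le p<q$ and let $n\ge 1$. Then $$\operatorname{Card}\{F_n^{p,q}\}=\sum_{k=0}^{\lfloor \frac{n-p}{q}\rfloor}\left[\binom{2n-(kq+p)-1}{n-1}-\binom{2n-(kq+p)-1}{n}\right].$$
   Context: A Dyck (Catalan) path of semilength $n$ is a lattice path from $(0,0)$ to $(2n,0)$ with steps $(1,1)$ and $(1,-1)$ that never goes below the $x$-axis. Its first rise is the length of its maximal initial run of $(1,1)$ steps. For integers $0\le p<q$, the set $F_n^{p,q}$ of generalized Fine sequences on $[n]$ congruous $q$ modulo $p$ is the set of Dyck paths of semilength $n$ whose first rise equals $kq+p$ for some integer $k\ge 0$. *)

theory Defs
  imports Complex_Main
begin

text \<open>A lattice path is encoded as a list of steps: True = up step (1,1),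
  False = down step (1,-1).\<close>

definition height :: "bool list \<Rightarrow> int" where
  "height xs = (\<Sum>s\<leftarrow>xs. if s then 1 else -1)"

definition dyck_path :: "nat \<Rightarrow> bool list \<Rightarrow> bool" where
  "dyck_path n xs \<longleftrightarrow> length xs = 2 * n \<and> height xs = 0 \<and>
     (\<forall>i\<le>length xs. height (take i xs) \<ge> 0)"

definition first_rise :: "bool list \<Rightarrow> nat" where
  "first_rise xs = length (takeWhile (\<lambda>s. s) xs)"

definition gen_fine :: "nat \<Rightarrow> int \<Rightarrow> int \<Rightarrow> bool list set" where
  "gen_fine n p q = {xs. dyck_path n xs \<and> (\<exists>k::int. k \<ge> 0 \<and> int (first_rise xs) = k * q + p)}"

end

theory Submission
  imports Defs
begin

fun okp :: "int \<Rightarrow> bool list \<Rightarrow> bool" where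
  "okp h [] = (h = 0)"
| "okp h (x # xs) = (let h' = (if x then h + 1 else h - 1) in h' \<ge> 0 \<and> okp h' xs)"

lemma height_Nil[simp]: "height [] = 0" by (simp add: height_def)
lemma height_Cons[simp]: "height (x # xs) = (if x then 1 else -1) + height xs"
  by (simp add: height_def)
lemma height_append[simp]: "height (xs @ ys) = height xs + height ys"
  by (simp add: height_def)

lemma okp_iff:
  "h \<ge> 0 \<Longrightarrow> okp h ys \<longleftrightarrow> h + height ys = 0 \<and> (\<forall>i\<le>length ys. h + height (take i ys) \<ge> 0)"
proof (induction ys arbitrary: h)
  case Nil
  then show ?case by auto
next
  case (Cons x xs)
  let ?h' = "if x then h + 1 else h - 1"
  show ?case
  proof
    assume a: "okp h (x # xs)"
    hence h': "?h' \<ge> 0" "okp ?h' xs" by (auto simp: Let_def)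
    with Cons.IH[of ?h'] have *: "?h' + height xs = 0" "\<forall>i\<le>length xs. ?h' + height (take i xs) \<ge> 0"
      by auto
    show "h + height (x # xs) = 0 \<and> (\<forall>i\<le>length (x # xs). h + height (take i (x # xs)) \<ge> 0)"
    proof (intro conjI allI impI)
      show "h + height (x # xs) = 0" using *(1) by (auto split: if_splits)
    next
      fix i assume "i \<le> length (x # xs)"
      then show "h + height (take i (x # xs)) \<ge> 0"
      proof (cases i)
        case 0 then show ?thesis using Cons.prems by simp
      next
        case (Suc j)
        then have "j \<le> length xs" using \<open>i \<le> _\<close> by simp
        then show ?thesis using *(2) Suc by (auto split: if_splits)
      qed
    qed
  next
    assume b: "h + height (x # xs) = 0 \<and> (\<forall>i\<le>length (x # xs). h + height (take i (x # xs)) \<ge> 0)"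
    have h1: "?h' \<ge> 0" using b[THEN conjunct2, rule_format, of 1] by (auto split: if_splits)
    have "?h' + height xs = 0" using b by (auto split: if_splits)
    moreover have "\<forall>i\<le>length xs. ?h' + height (take i xs) \<ge> 0"
    proof (intro allI impI)
      fix i assume "i \<le> length xs"
      then have "h + height (take (Suc i) (x # xs)) \<ge> 0" using b by auto
      then show "?h' + height (take i xs) \<ge> 0" by (auto split: if_splits)
    qed
    ultimately have "okp ?h' xs" using Cons.IH[OF h1] by blast
    with h1 show "okp h (x # xs)" by (simp add: Let_def)
  qed
qed

lemma dyck_okp: "dyck_path n xs \<longleftrightarrow> length xs = 2 * n \<and> okp 0 xs"
  unfolding dyck_path_def using okp_iff[of 0 xs] by auto

lemma okp_len: "okp h ys \<Longrightarrow> h \<le> int (length ys)"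
  by (induction h ys rule: okp.induct) (auto simp: Let_def split: if_splits)

lemma okp_rep: "h \<ge> 0 \<Longrightarrow> okp h (replicate r True @ ys) = okp (h + int r) ys"
  by (induction r arbitrary: h) (auto simp: Let_def add.assoc)

definition S :: "nat \<Rightarrow> nat \<Rightarrow> bool list set" where
  "S h m = {ys. length ys = m \<and> okp (int h) ys}"

definition A :: "nat \<Rightarrow> nat \<Rightarrow> int" where
  "A h u = int ((h + 2*u) choose u) - (if u = 0 then 0 else int ((h + 2*u) choose (u - 1)))"

lemma S_finite: "finite (S h m)"
proof -
  have "S h m \<subseteq> {ys. set ys \<subseteq> UNIV \<and> length ys = m}" by (auto simp: S_def)
  moreover have "finite {ys::bool list. set ys \<subseteq> UNIV \<and> length ys = m}"
    by (rule finite_lists_length_eq) simp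
  ultimately show ?thesis by (rule finite_subset)
qed

lemma S_Suc: "S h (Suc m) = Cons True ` S (Suc h) m \<union> (if h > 0 then Cons False ` S (h - 1) m else {})"
proof -
  have "ys \<in> S h (Suc m) \<longleftrightarrow> ys \<in> Cons True ` S (Suc h) m \<union> (if h > 0 then Cons False ` S (h - 1) m else {})" for ys
  proof (cases ys)
    case Nil then show ?thesis by (auto simp: S_def)
  next
    case (Cons x xs)
    then show ?thesis by (cases x) (auto simp: S_def Let_def of_nat_diff add.commute)
  qed
  then show ?thesis by blast
qed

lemma S_small: "m < h \<Longrightarrow> S h m = {}"
  using okp_len by (force simp: S_def)

lemma card_S: "h + 2*u = m \<Longrightarrow> int (card (S h m)) = A h u"
proof (induction m arbitrary: h u)
  case 0
  then have "S h 0 = {[]}" by (auto simp: S_def)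
  then show ?case using 0 by (simp add: A_def)
next
  case (Suc m)
  have c: "card (S h (Suc m)) = card (S (Suc h) m) + (if h > 0 then card (S (h - 1) m) else 0)"
    unfolding S_Suc
    by (subst card_Un_disjoint) (auto simp: S_finite card_image)
  have T: "int (card (S (Suc h) m)) = (if u = 0 then 0 else A (Suc h) (u - 1))"
  proof (cases u)
    case 0 then show ?thesis using Suc.prems S_small[of m "Suc h"] by simp
  next
    case (Suc v) then show ?thesis using Suc.IH[of "Suc h" v] \<open>h + 2 * u = Suc m\<close> by simp
  qed
  have F: "h > 0 \<Longrightarrow> int (card (S (h - 1) m)) = A (h - 1) u"
    using Suc.IH[of "h - 1" u] Suc.prems by simp
  show ?case
  proof (cases "h > 0")
    case True
    show ?thesis
    proof (cases u)
      case 0 then show ?thesis using c T F True by (simp add: A_def)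
    next
      case (Suc v)
      then obtain g where g: "h = Suc g" using True by (cases h) auto
      show ?thesis
      proof (cases v)
        case 0 then show ?thesis using c T F True Suc g by (simp add: A_def)
      next
        case (Suc w)
        show ?thesis using c T F True \<open>u = Suc v\<close> Suc g
          by (simp add: A_def numeral_2_eq_2)
      qed
    qed
  next
    case False
    then have h0: "h = 0" by simp
    then obtain v where v: "u = Suc v" using Suc.prems by (cases u) auto
    have sym: "(Suc (2*v) choose Suc v) = (Suc (2*v) choose v)"
      using binomial_symmetric[of v "Suc (2*v)"] by simp
    show ?thesis
    proof (cases v)
      case 0 then show ?thesis using c T h0 v by (simp add: A_def)
    next
      case (Suc w)
      show ?thesis using c T h0 v Suc sym by (simp add: A_def numeral_2_eq_2)
    qed
  qed
qed


lemma tw_rep: "takeWhile (\<lambda>s. s) (replicate r True @ False # ys) = replicate r True"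
  by (induction r) auto

definition Fr :: "nat \<Rightarrow> nat \<Rightarrow> bool list set" where
  "Fr n r = {xs. dyck_path n xs \<and> first_rise xs = r}"

lemma split_rise:
  "xs = replicate (first_rise xs) True @ dropWhile (\<lambda>s. s) xs"
proof -
  have "replicate (first_rise xs) True = takeWhile (\<lambda>s. s) xs"
    unfolding first_rise_def
    by (rule replicate_length_same) (auto dest: set_takeWhileD)
  then show ?thesis by (simp add: takeWhile_dropWhile_id)
qed

lemma drop_rise:
  assumes "dropWhile (\<lambda>s. s) xs \<noteq> []"
  obtains ys where "dropWhile (\<lambda>s. s) xs = False # ys"
  using hd_dropWhile[OF assms] assms by (cases "dropWhile (\<lambda>s. s) xs") auto

lemma first_rise_le:
  assumes "dyck_path n xs" shows "first_rise xs \<le> n"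
proof -
  let ?r = "first_rise xs" and ?d = "dropWhile (\<lambda>s. s) xs"
  have "okp 0 (replicate ?r True @ ?d)" "length (replicate ?r True @ ?d) = 2 * n"
    using assms split_rise[of xs] by (auto simp: dyck_okp)
  then have "okp (int ?r) ?d" "?r + length ?d = 2 * n" by (auto simp: okp_rep)
  then show ?thesis using okp_len by fastforce
qed

lemma Fr0: "n \<ge> 1 \<Longrightarrow> Fr n 0 = {}"
proof (rule ccontr)
  assume "n \<ge> 1" "Fr n 0 \<noteq> {}"
  then obtain xs where xs: "dyck_path n xs" "first_rise xs = 0" by (auto simp: Fr_def)
  have e: "xs = dropWhile (\<lambda>s. s) xs" using split_rise[of xs] xs by simp
  have "xs \<noteq> []" using xs \<open>n \<ge> 1\<close> by (auto simp: dyck_path_def)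
  then obtain ys where "dropWhile (\<lambda>s. s) xs = False # ys" using e drop_rise by metis
  then have "xs = False # ys" using e by simp
  then show False using xs by (simp add: dyck_okp)
qed

lemma Fr_img:
  assumes "1 \<le> r" "r \<le> n"
  shows "Fr n r = (\<lambda>ys. replicate r True @ False # ys) ` S (r - 1) (2 * n - r - 1)"
proof
  show "(\<lambda>ys. replicate r True @ False # ys) ` S (r - 1) (2 * n - r - 1) \<subseteq> Fr n r"
  proof
    fix xs assume "xs \<in> (\<lambda>ys. replicate r True @ False # ys) ` S (r - 1) (2 * n - r - 1)"
    then obtain ys where ys: "xs = replicate r True @ False # ys" "length ys = 2 * n - r - 1"
      "okp (int (r - 1)) ys" by (auto simp: S_def)
    have "okp 0 xs" using ys assms by (simp add: okp_rep of_nat_diff)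
    moreover have "length xs = 2 * n" using ys assms by simp
    moreover have "first_rise xs = r" using ys by (simp add: first_rise_def tw_rep)
    ultimately show "xs \<in> Fr n r" by (simp add: Fr_def dyck_okp)
  qed
next
  show "Fr n r \<subseteq> (\<lambda>ys. replicate r True @ False # ys) ` S (r - 1) (2 * n - r - 1)"
  proof
    fix xs assume "xs \<in> Fr n r"
    then have xs: "dyck_path n xs" "first_rise xs = r" by (auto simp: Fr_def)
    let ?d = "dropWhile (\<lambda>s. s) xs"
    have e: "xs = replicate r True @ ?d" using split_rise[of xs] xs by simp
    have "?d \<noteq> []"
    proof
      assume "?d = []"
      then have "length xs = r" using e by (metis append_Nil2 length_replicate)
      then show False using xs assms by (simp add: dyck_path_def)
    qed
    then obtain ys where ys: "?d = False # ys" using drop_rise by metis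
    have "okp 0 (replicate r True @ False # ys)" "length (replicate r True @ False # ys) = 2 * n"
      using xs e ys by (auto simp: dyck_okp)
    then have "okp (int r - 1) ys" "length ys = 2 * n - r - 1" by (auto simp: okp_rep Let_def)
    then have "ys \<in> S (r - 1) (2 * n - r - 1)" using assms by (simp add: S_def of_nat_diff)
    then show "xs \<in> (\<lambda>ys. replicate r True @ False # ys) ` S (r - 1) (2 * n - r - 1)"
      using e ys by auto
  qed
qed

lemma card_Fr:
  assumes "r \<le> n" "1 \<le> n"
  shows "int (card (Fr n r)) = int ((2 * n - r - 1) choose (n - 1)) - int ((2 * n - r - 1) choose n)"
proof (cases "r = 0")
  case True
  have "(2 * n - 1 choose n - 1) = (2 * n - 1 choose n)"
    using binomial_symmetric[of "n - 1" "2 * n - 1"] assms by simp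
  then show ?thesis using True Fr0 assms by simp
next
  case False
  have "card (Fr n r) = card (S (r - 1) (2 * n - r - 1))"
  proof -
    have r1: "1 \<le> r" using False by simp
    show ?thesis unfolding Fr_img[OF r1 assms(1)] by (subst card_image) (auto simp: inj_on_def)
  qed
  also have "int \<dots> = A (r - 1) (n - r)" by (rule card_S) (use False assms in simp)
  finally have c: "int (card (Fr n r)) = A (r - 1) (n - r)" .
  have N: "r - 1 + 2 * (n - r) = 2 * n - r - 1" using False assms by simp
  have s1: "(2 * n - r - 1 choose (n - r)) = (2 * n - r - 1 choose (n - 1))"
    using binomial_symmetric[of "n - r" "2 * n - r - 1"] False assms
    by (simp add: diff_diff_add)
  show ?thesis
  proof (cases "r = n")
    case True then show ?thesis using c False by (simp add: A_def)
  next
    case ne: False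
    have s2: "(2 * n - r - 1 choose (n - r - 1)) = (2 * n - r - 1 choose n)"
      using binomial_symmetric[of "n - r - 1" "2 * n - r - 1"] False assms ne by simp
    show ?thesis using c ne assms N s1 s2 by (simp add: A_def)
  qed
qed

theorem mainTheorem1:
  fixes p q :: int and n :: nat
  assumes "0 \<le> p" and "p < q" and "n \<ge> 1"
  shows "int (card (gen_fine n p q)) =
    (\<Sum>k\<in>{0..\<lfloor>real_of_int (int n - p) / real_of_int q\<rfloor>}.
       int ((2 * n - nat (k * q + p) - 1) choose (n - 1))
       - int ((2 * n - nat (k * q + p) - 1) choose n))"
proof -
  let ?K = "{0..\<lfloor>real_of_int (int n - p) / real_of_int q\<rfloor>}"
  have q: "q > 0" using assms by simp
  have K: "k \<in> ?K \<longleftrightarrow> 0 \<le> k \<and> k * q + p \<le> int n" for k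
  proof -
    have "k \<le> \<lfloor>real_of_int (int n - p) / real_of_int q\<rfloor> \<longleftrightarrow>
          real_of_int k \<le> real_of_int (int n - p) / real_of_int q" by (simp add: le_floor_iff)
    also have "\<dots> \<longleftrightarrow> real_of_int k * real_of_int q \<le> real_of_int (int n - p)"
      using q by (simp add: pos_le_divide_eq)
    also have "\<dots> \<longleftrightarrow> k * q \<le> int n - p" by (metis of_int_le_iff of_int_mult)
    finally show ?thesis by auto
  qed
  have G: "gen_fine n p q = (\<Union>k\<in>?K. Fr n (nat (k * q + p)))"
  proof (intro set_eqI iffI)
    fix xs assume "xs \<in> gen_fine n p q"
    then obtain k where k: "dyck_path n xs" "k \<ge> 0" "int (first_rise xs) = k * q + p"
      by (auto simp: gen_fine_def)
    have "first_rise xs \<le> n" using first_rise_le[OF k(1)] .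
    then have "k \<in> ?K" unfolding K using k by simp
    moreover have "xs \<in> Fr n (nat (k * q + p))" using k by (auto simp: Fr_def)
    ultimately show "xs \<in> (\<Union>k\<in>?K. Fr n (nat (k * q + p)))" by blast
  next
    fix xs assume "xs \<in> (\<Union>k\<in>?K. Fr n (nat (k * q + p)))"
    then obtain k where "k \<in> ?K" "xs \<in> Fr n (nat (k * q + p))" by blast
    then show "xs \<in> gen_fine n p q" using K assms q
      by (auto simp: Fr_def gen_fine_def)
  qed
  have fin: "finite (Fr n r)" for r
  proof -
    have "Fr n r \<subseteq> {ys. set ys \<subseteq> UNIV \<and> length ys = 2 * n}" by (auto simp: Fr_def dyck_path_def)
    moreover have "finite {ys::bool list. set ys \<subseteq> UNIV \<and> length ys = 2 * n}"
      by (rule finite_lists_length_eq) simp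
    ultimately show ?thesis by (rule finite_subset)
  qed
  have "card (gen_fine n p q) = (\<Sum>k\<in>?K. card (Fr n (nat (k * q + p))))"
    unfolding G
  proof (rule card_UN_disjoint)
    show "\<forall>i\<in>?K. \<forall>j\<in>?K. i \<noteq> j \<longrightarrow> Fr n (nat (i * q + p)) \<inter> Fr n (nat (j * q + p)) = {}"
    proof (intro ballI impI)
      fix i j assume ij: "i \<in> ?K" "j \<in> ?K" "i \<noteq> j"
      then have "i * q \<noteq> j * q" using q by simp
      then have "nat (i * q + p) \<noteq> nat (j * q + p)" using ij K assms q
        by (metis add.commute add_left_cancel eq_nat_nat_iff mult_nonneg_nonneg less_imp_le add_nonneg_nonneg)
      then show "Fr n (nat (i * q + p)) \<inter> Fr n (nat (j * q + p)) = {}" by (auto simp: Fr_def)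
    qed
  qed (auto simp: fin)
  then have "int (card (gen_fine n p q)) = (\<Sum>k\<in>?K. int (card (Fr n (nat (k * q + p)))))"
    by simp
  also have "\<dots> = (\<Sum>k\<in>?K. int ((2 * n - nat (k * q + p) - 1) choose (n - 1))
       - int ((2 * n - nat (k * q + p) - 1) choose n))"
  proof (rule sum.cong)
    fix k assume "k \<in> ?K"
    then have "k * q + p \<le> int n" using K by simp
    then have "nat (k * q + p) \<le> n" by linarith
    then show "int (card (Fr n (nat (k * q + p)))) = int ((2 * n - nat (k * q + p) - 1) choose (n - 1))
       - int ((2 * n - nat (k * q + p) - 1) choose n)" using card_Fr assms(3) by blast
  qed simp
  finally show ?thesis .
qed

end
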